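(* Let $m\ge1$ and let $m_0$ be the squarefree part of $m$. Then \[h_m(1),\ h_m'(1),\ h_m''(1)\ll\frac{\log^2(m+1)}{m_0}.\] Moreover, for any fixed $1/2<\sigma<1$, \[\sup_{\Re(s)>\sigma}|h_m(s)|\ll\frac{m^{O(1/\log(1+m)^{\sigma/2})}}{m_0}.\]
   Context: Write $m=2^{e_1}p_2^{e_2}\cdots p_r^{e_r}$ with $e_1\ge0$, $p_j$ distinct odd primes, $e_j\ge1$; let $m_0'$ be the squarefree part of $m/2^{e_1}$ and $\omega(m_0')$ its number of prime factors. For complex $s$ with $\Re(s)>1/2$, \[h_m(s)=\frac{(-1)^{\omega(m_0')}}{m_0'}\,\frac{\prod_{2\le j\le r,\ e_j\text{ even}}\bigl(1-\frac2{p_j}\bigr)\bigl(1+\frac{2(p_j-1)}{(p_j-2)(p_j^s-1)}\bigr)}{\prod_{p\mid m}\bigl(1+\frac2{p^s-1}\bigr)}\,\tilde\kappa(m,s),\] where $\tilde\kappa(m,s)=1$ if $m$ is odd and $\tilde\kappa(m,s)=\frac{(-1)^{e_1}}2\frac{8^s+4^s}{8^s+2^s+2}\bigl(1+\frac{2(1+(-1)^{e_1})}{4^s(2^s-1)}\bigr)$ if $m$ is even. Derivatives are with respect to $s$. *)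

theory Defs
  imports "HOL-Analysis.Analysis" "HOL-Computational_Algebra.Computational_Algebra"
begin

text \<open>Squarefree part of n: product of primes occurring to an odd power,
  so that n = sqf_part n * (square).\<close>
definition sqf_part :: "nat \<Rightarrow> nat" where
  "sqf_part n = (\<Prod>p\<in>{p\<in>prime_factors n. odd (multiplicity p n)}. p)"

definition kappa_t :: "nat \<Rightarrow> complex \<Rightarrow> complex" where
  "kappa_t m s =
     (if odd m then 1
      else (let e1 = multiplicity (2::nat) m in
        ((-1) ^ e1 / 2) * ((8 powr s + 4 powr s) / (8 powr s + 2 powr s + 2))
        * (1 + 2 * (1 + (-1) ^ e1) / (4 powr s * (2 powr s - 1)))))"

definition h :: "nat \<Rightarrow> complex \<Rightarrow> complex" where
  "h m s =
     (let m' = m div 2 ^ multiplicity (2::nat) m;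
          m0' = sqf_part m'
      in ((-1) ^ card (prime_factors m0') / of_nat m0')
         * ((\<Prod>p\<in>{p\<in>prime_factors m. p \<noteq> 2 \<and> even (multiplicity p m)}.
               (1 - 2 / of_nat p) * (1 + 2 * (of_nat p - 1) / ((of_nat p - 2) * (of_nat p powr s - 1))))
            / (\<Prod>p\<in>prime_factors m. 1 + 2 / (of_nat p powr s - 1)))
         * kappa_t m s)"

end

theory Submission
  imports Defs "HOL-Complex_Analysis.Complex_Analysis"
begin


lemma cpow_nat: "0 < p \<Longrightarrow> (of_nat p :: complex) powr s = exp (s * of_real (ln (real p)))"
  by (simp add: powr_def)

lemma cpow_norm: "0 < p \<Longrightarrow> norm ((of_nat p :: complex) powr s) = real p powr Re s"
  by (simp add: cpow_nat powr_def mult.commute)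

lemma cpow_Re: "0 < p \<Longrightarrow> Re ((of_nat p :: complex) powr s) = real p powr Re s * cos (Im s * ln (real p))"
  by (simp add: cpow_nat powr_def Re_exp mult.commute)

lemma cpow_8: "(8::complex) powr s = (2 powr s)^3"
proof -
  have "(8::complex) = of_nat 8" by simp
  have "ln (8::real) = 3 * ln 2" using ln_realpow[of 2 3] by simp
  then have "(8::complex) powr s = exp (of_nat 3 * (s * of_real (ln 2)))"
    using cpow_nat[of 8 s] by (simp add: algebra_simps)
  also have "\<dots> = (2 powr s)^3" unfolding exp_of_nat_mult using cpow_nat[of 2 s] by simp
  finally show ?thesis .
qed

lemma cpow_4: "(4::complex) powr s = (2 powr s)^2"
proof -
  have "ln (4::real) = 2 * ln 2" using ln_realpow[of 2 2] by simp
  then have "(4::complex) powr s = exp (of_nat 2 * (s * of_real (ln 2)))"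
    using cpow_nat[of 4 s] by (simp add: algebra_simps)
  also have "\<dots> = (2 powr s)^2" unfolding exp_of_nat_mult using cpow_nat[of 2 s] by simp
  finally show ?thesis .
qed

lemma quad_lower:
  fixes x :: complex assumes "norm x \<ge> sqrt 2"
  shows "norm (x^2 - x + 2) \<ge> (norm x - sqrt 2)^2"
proof -
  define a where "a = (1 + \<i> * of_real (sqrt 7)) / (2::complex)"
  have fa: "x^2 - x + 2 = (x - a) * (x - cnj a)"
    unfolding a_def by (simp add: algebra_simps power2_eq_square complex_eq_iff) (simp add: field_simps)
  have na: "norm a = sqrt 2"
    unfolding a_def by (simp add: cmod_def power_divide)
  have nb: "norm (cnj a) = sqrt 2" using na by simp
  have "norm (x - a) \<ge> norm x - sqrt 2" using norm_triangle_ineq2[of x a] na by simp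
  moreover have "norm (x - cnj a) \<ge> norm x - sqrt 2" using norm_triangle_ineq2[of x "cnj a"] nb by simp
  ultimately have "norm (x - a) * norm (x - cnj a) \<ge> (norm x - sqrt 2) * (norm x - sqrt 2)"
    using assms by (intro mult_mono) auto
  then show ?thesis by (metis fa norm_mult power2_eq_square)
qed

lemma sqrt2_bounds: "1.4 < sqrt (2::real)" "sqrt (2::real) < 1.5"
proof -
  show "1.4 < sqrt (2::real)" by (rule real_less_rsqrt) (simp add: power2_eq_square)
  show "sqrt (2::real) < 1.5" by (rule real_less_lsqrt) (simp_all add: power2_eq_square)
qed

lemma two_powr_gt_sqrt2: "1/2 < \<sigma> \<Longrightarrow> sqrt 2 < (2::real) powr \<sigma>"
  using powr_less_mono[of "1/2" \<sigma> "2::real"] by (simp add: powr_half_sqrt)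

lemma kappa_bound:
  assumes s1: "1/2 < \<sigma>" and s2: "\<sigma> \<le> Re s"
  shows "norm (kappa_t m s) \<le> 3 * ((2 powr \<sigma>) / (2 powr \<sigma> - sqrt 2))^2"
proof -
  define t where "t = (2::real) powr \<sigma>"
  define B where "B = t / (t - sqrt 2)"
  define x where "x = (2::complex) powr s"
  have tgt: "sqrt 2 < t" unfolding t_def using two_powr_gt_sqrt2[OF s1] .
  have nx: "norm x = 2 powr Re s" unfolding x_def using cpow_norm[of 2 s] by simp
  have nxt: "t \<le> norm x" unfolding nx t_def using s2 by (simp add: powr_mono)
  have B1: "1 \<le> B" unfolding B_def using tgt by (simp add: field_simps)
  have nB: "norm x / (norm x - sqrt 2) \<le> B"
    unfolding B_def using tgt nxt by (simp add: field_simps)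
  show ?thesis
  proof (cases "odd m")
    case True
    have "1 \<le> B^2" using B1 by (simp add: one_le_power)
    then have "1 \<le> 3 * B^2" by simp
    then show ?thesis using True unfolding kappa_t_def B_def t_def by simp
  next
    case False
    define e where "e = multiplicity (2::nat) m"
    have s2g: "sqrt 2 \<ge> 1.4" using sqrt2_bounds by simp
    have xn1: "x + 1 \<noteq> 0"
    proof
      assume "x + 1 = 0" then have "x = -1" by (simp add: eq_neg_iff_add_eq_0)
      then show False using nxt tgt s2g by simp
    qed
    have x1: "x - 1 \<noteq> 0" using nxt tgt s2g by auto
    have qpos: "0 < (norm x - sqrt 2)^2" using nxt tgt by simp
    have ql: "norm (x^2 - x + 2) \<ge> (norm x - sqrt 2)^2" using quad_lower nxt tgt by simp
    have q0: "x^2 - x + 2 \<noteq> 0" using ql qpos by auto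
    have q: "(x^3+x^2)/(x^3+x+2) = x^2/(x^2-x+2)"
    proof -
      have "x^3+x^2 = x^2 * (x+1)" "x^3+x+2 = (x^2-x+2)*(x+1)"
        by (simp_all add: algebra_simps power2_eq_square power3_eq_cube)
      then show ?thesis using xn1 by simp
    qed
    have nq: "norm ((x^3+x^2)/(x^3+x+2)) \<le> B^2"
    proof -
      have "norm ((x^3+x^2)/(x^3+x+2)) = norm x ^2 / norm (x^2-x+2)"
        by (simp add: q norm_divide norm_power)
      also have "\<dots> \<le> norm x ^2 / (norm x - sqrt 2)^2"
        using ql qpos by (intro divide_left_mono mult_pos_pos) auto
      also have "\<dots> = (norm x / (norm x - sqrt 2))^2" by (simp add: power_divide)
      also have "\<dots> \<le> B^2" using nB nxt tgt by (intro power_mono) auto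
      finally show ?thesis .
    qed
    have n3: "norm (1 + 2 * (1 + (-1)^e) / (x^2 * (x - 1))) \<le> 6"
    proof -
      have c: "norm (2 * (1 + (-1::complex)^e)) \<le> 4"
        by (cases "even e") auto
      have d: "norm (x^2 * (x - 1)) \<ge> 0.8"
      proof -
        have "norm (x - 1) \<ge> norm x - 1" using norm_triangle_ineq2[of x 1] by simp
        moreover have "norm x - 1 \<ge> 0.4" using nxt tgt s2g by simp
        moreover have "norm x ^2 \<ge> 2" using nxt tgt s2g
          by (smt (verit) power_mono real_sqrt_pow2 real_sqrt_ge_zero)
        ultimately have "norm x ^2 * norm (x - 1) \<ge> 2 * 0.4"
          by (intro mult_mono) auto
        then show ?thesis by (simp add: norm_mult norm_power)
      qed
      have "norm (2 * (1 + (-1)^e) / (x^2 * (x - 1))) \<le> 4 / 0.8"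
        unfolding norm_divide using c d by (intro frac_le) auto
      then show ?thesis using norm_triangle_ineq[of 1 "2 * (1 + (-1)^e) / (x^2 * (x - 1))"] by simp
    qed
    have "kappa_t m s = ((-1)^e/2) * ((x^3+x^2)/(x^3+x+2)) * (1 + 2 * (1 + (-1)^e) / (x^2 * (x - 1)))"
      using False unfolding kappa_t_def Let_def e_def[symmetric] cpow_8 cpow_4 x_def by simp
    moreover have "norm ((-1)^e/2 :: complex) = 1/2" by (simp add: norm_divide norm_power)
    ultimately have "norm (kappa_t m s) = (1/2) * norm ((x^3+x^2)/(x^3+x+2)) * norm (1 + 2 * (1 + (-1)^e) / (x^2 * (x - 1)))"
      by (simp only: norm_mult)
    also have "\<dots> \<le> (1/2) * B^2 * 6"
      using nq n3 by (intro mult_mono) auto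
    finally show ?thesis unfolding B_def t_def by simp
  qed
qed

lemma prod_ratio_bound:
  fixes N D :: "nat \<Rightarrow> complex" and b :: "nat \<Rightarrow> real"
  assumes fin: "finite P" and sub: "E \<subseteq> P" and D0: "\<And>p. p \<in> P \<Longrightarrow> D p \<noteq> 0"
    and bE: "\<And>p. p \<in> E \<Longrightarrow> norm (N p / D p) \<le> b p"
    and bR: "\<And>p. p \<in> P - E \<Longrightarrow> norm (1 / D p) \<le> b p"
  shows "norm ((\<Prod>p\<in>E. N p) / (\<Prod>p\<in>P. D p)) \<le> (\<Prod>p\<in>P. b p)"
proof -
  have finE: "finite E" using fin sub finite_subset by blast
  have "(\<Prod>p\<in>P. D p) = (\<Prod>p\<in>P - E. D p) * (\<Prod>p\<in>E. D p)"
    using prod.subset_diff[OF sub fin] .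
  then have "(\<Prod>p\<in>E. N p) / (\<Prod>p\<in>P. D p) = (\<Prod>p\<in>E. N p / D p) * (\<Prod>p\<in>P - E. 1 / D p)"
    by (simp add: prod_dividef field_simps)
  then have "norm ((\<Prod>p\<in>E. N p) / (\<Prod>p\<in>P. D p)) = (\<Prod>p\<in>E. norm (N p / D p)) * (\<Prod>p\<in>P - E. norm (1 / D p))"
    by (simp add: norm_mult prod_norm)
  also have "\<dots> \<le> (\<Prod>p\<in>E. b p) * (\<Prod>p\<in>P - E. b p)"
    using bE bR by (intro mult_mono prod_mono prod_nonneg) (auto intro: order_trans[OF norm_ge_zero])
  also have "\<dots> = (\<Prod>p\<in>P. b p)"
    using prod.subset_diff[OF sub fin, of b] by simp
  finally show ?thesis .
qed

lemma ND_alg: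
  fixes x :: complex and p :: nat
  assumes "x \<noteq> 1" "x \<noteq> -1" "p \<noteq> 2" "p \<noteq> 0"
  shows "(1 - 2 / of_nat p) * (1 + 2 * (of_nat p - 1) / ((of_nat p - 2) * (x - 1))) / (1 + 2 / (x - 1))
      = ((of_nat p - 2) * x + of_nat p) / (of_nat p * (x + 1))"
    and "1 / (1 + 2 / (x - 1)) = (x - 1) / (x + 1)"
proof -
  have a: "x - 1 \<noteq> 0" using assms by simp
  have b: "x + 1 \<noteq> 0" using assms eq_neg_iff_add_eq_0[of x 1] by auto
  have c: "(of_nat p :: complex) - 2 \<noteq> 0"
  proof
    assume "(of_nat p :: complex) - 2 = 0" then have "(of_nat p :: complex) = of_nat 2" by simp
    then show False using assms(3) by (simp only: of_nat_eq_iff)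
  qed
  have d: "(of_nat p :: complex) \<noteq> 0" using assms by simp
  have e: "1 + 2 / (x - 1) = (x + 1) / (x - 1)" using a by (simp add: field_simps)
  show "1 / (1 + 2 / (x - 1)) = (x - 1) / (x + 1)" unfolding e by simp
  show "(1 - 2 / of_nat p) * (1 + 2 * (of_nat p - 1) / ((of_nat p - 2) * (x - 1))) / (1 + 2 / (x - 1))
      = ((of_nat p - 2) * x + of_nat p) / (of_nat p * (x + 1))"
  proof -
    define P where "P = (of_nat p :: complex)"
    have cP: "P - 2 \<noteq> 0" and dP: "P \<noteq> 0" using c d unfolding P_def by auto
    have f: "(P - 2) * (x - 1) \<noteq> 0" using cP a by simp
    have 1: "1 - 2 / P = (P - 2) / P" using dP by (simp add: field_simps)
    have 2: "1 + 2 * (P - 1) / ((P - 2) * (x - 1)) = ((P - 2) * x + P) / ((P - 2) * (x - 1))"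
      using f by (simp add: divide_simps) (simp add: algebra_simps)
    have "(P - 2) / P * (((P - 2) * x + P) / ((P - 2) * (x - 1))) / ((x + 1) / (x - 1))
        = ((P - 2) * x + P) / (P * (x + 1))"
      using a b cP dP by (simp add: divide_simps)
    then show ?thesis unfolding e P_def[symmetric] 1 2 .
  qed
qed

lemma re_bound:
  fixes x :: complex and q :: nat
  assumes rx: "0 \<le> Re x" and q2: "2 \<le> q"
  shows "norm ((x - 1) / (x + 1)) \<le> 1"
    and "norm (((of_nat q - 2) * x + of_nat q) / (of_nat q * (x + 1))) \<le> 1"
proof -
  have "Re (x + 1) \<ge> 1" using rx by simp
  then have x1: "x + 1 \<noteq> 0" by (metis not_one_le_zero zero_complex.sel(1))
  have n1: "norm (x + 1) > 0" using x1 by simp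
  have "norm (x - 1)^2 \<le> norm (x + 1)^2"
    unfolding cmod_power2 using rx by (simp add: power2_eq_square algebra_simps)
  then have "norm (x - 1) \<le> norm (x + 1)" by (rule power2_le_imp_le) simp
  then show "norm ((x - 1) / (x + 1)) \<le> 1" using n1 by (simp add: norm_divide)
  define p where "p = real q"
  have p2: "2 \<le> p" using q2 unfolding p_def by simp
  have "norm ((of_nat q - 2) * x + of_nat q)^2 \<le> (p * norm (x + 1))^2"
  proof -
    have re: "Re ((of_nat q - 2) * x + of_nat q) = (p - 2) * Re x + p"
      and im: "Im ((of_nat q - 2) * x + of_nat q) = (p - 2) * Im x" by (simp_all add: p_def)
    have A: "((p - 2) * Re x + p)^2 \<le> (p * Re x + p)^2"
      using p2 rx by (intro power_mono) (auto intro: mult_right_mono add_nonneg_nonneg mult_nonneg_nonneg)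
    have B: "((p - 2) * Im x)^2 \<le> (p * Im x)^2"
      using p2 by (simp add: power_mult_distrib) (intro mult_right_mono power_mono, auto)
    have "(p * norm (x + 1))^2 = p^2 * (Re (x+1)^2 + Im (x+1)^2)"
      by (simp only: power_mult_distrib cmod_power2)
    also have "\<dots> = (p * Re x + p)^2 + (p * Im x)^2"
      by (simp add: algebra_simps power2_eq_square)
    finally have "(p * norm (x + 1))^2 = (p * Re x + p)^2 + (p * Im x)^2" .
    then show ?thesis unfolding cmod_power2 re im using A B by simp
  qed
  then have "norm ((of_nat q - 2) * x + of_nat q) \<le> p * norm (x + 1)"
    by (rule power2_le_imp_le) (use p2 in simp)
  moreover have "norm (of_nat q * (x + 1)) = p * norm (x + 1)" by (simp add: norm_mult p_def)
  ultimately show "norm (((of_nat q - 2) * x + of_nat q) / (of_nat q * (x + 1))) \<le> 1"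
    using n1 p2 by (simp add: norm_divide)
qed

lemma r_bound:
  fixes x :: complex and q :: nat
  assumes rx: "1 < norm x" and q2: "2 \<le> q"
  shows "norm ((x - 1) / (x + 1)) \<le> 1 + 2 / (norm x - 1)"
    and "norm (((of_nat q - 2) * x + of_nat q) / (of_nat q * (x + 1))) \<le> 1 + 2 / (norm x - 1)"
proof -
  define r where "r = norm x"
  have r1: "1 < r" using rx r_def by simp
  have lo: "norm (x + 1) \<ge> r - 1" using norm_triangle_ineq2[of x "-1"] r_def by simp
  have up: "norm (x - 1) \<le> r + 1" using norm_triangle_ineq4[of x 1] r_def by simp
  have eq: "1 + 2 / (r - 1) = (r + 1) / (r - 1)" using r1 by (simp add: field_simps)
  have "norm ((x - 1) / (x + 1)) \<le> (r + 1) / (r - 1)"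
    unfolding norm_divide using lo up r1 by (intro frac_le) auto
  then show "norm ((x - 1) / (x + 1)) \<le> 1 + 2 / (norm x - 1)" using eq r_def by simp
  define p where "p = real q"
  have p2: "2 \<le> p" using q2 unfolding p_def by simp
  have up2: "norm ((of_nat q - 2) * x + of_nat q) \<le> (p - 2) * r + p"
  proof -
    have "norm ((of_nat q - 2) * x + of_nat q) \<le> norm ((of_nat q - 2) * x) + norm (of_nat q :: complex)"
      by (rule norm_triangle_ineq)
    moreover have "norm ((of_nat q - 2 :: complex)) = p - 2"
    proof -
      have "(of_nat q - 2 :: complex) = of_real (p - 2)" by (simp add: p_def)
      moreover have "norm (of_real (p-2) :: complex) = p - 2" using p2 by (simp only: norm_of_real)
      ultimately show ?thesis by metis
    qed
    ultimately show ?thesis by (simp add: norm_mult r_def p_def)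
  qed
  have lo2: "norm (of_nat q * (x + 1)) \<ge> p * (r - 1)"
    using lo p2 by (simp add: norm_mult p_def)
  have "norm (((of_nat q - 2) * x + of_nat q) / (of_nat q * (x + 1))) \<le> ((p - 2) * r + p) / (p * (r - 1))"
    unfolding norm_divide using up2 lo2 r1 p2 by (intro frac_le) auto
  also have "\<dots> \<le> (r + 1) / (r - 1)"
    using r1 p2 by (simp add: field_simps)
  finally show "norm (((of_nat q - 2) * x + of_nat q) / (of_nat q * (x + 1))) \<le> 1 + 2 / (norm x - 1)"
    using eq r_def by simp
qed

lemma pf_pos: "p \<in> prime_factors (n::nat) \<Longrightarrow> 0 < p"
  using in_prime_factors_imp_prime prime_gt_0_nat by blast

lemma sqf_pos: "0 < sqf_part n"
  unfolding sqf_part_def by (intro prod_pos) (auto intro: pf_pos)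

lemma sqf_le: "m \<ge> 1 \<Longrightarrow> sqf_part m \<le> 2 * sqf_part (m div 2 ^ multiplicity (2::nat) m)"
proof -
  assume m1: "m \<ge> 1"
  define e where "e = multiplicity (2::nat) m"
  define m' where "m' = m div 2 ^ e"
  have mm: "m = 2^e * m'" unfolding m'_def e_def by (simp add: multiplicity_dvd)
  have m'0: "m' \<noteq> 0" using m1 mm by (cases "m' = 0") auto
  have mult: "multiplicity p m = multiplicity p m'" if "prime p" "p \<noteq> 2" for p :: nat
  proof -
    have "\<not> p dvd 2^e"
      using that primes_dvd_imp_eq[of p 2] prime_dvd_power[of p 2 e] two_is_prime_nat by blast
    then have "multiplicity p (2^e) = 0" by (rule not_dvd_imp_multiplicity_0)
    moreover have "multiplicity p (2^e * m') = multiplicity p (2^e) + multiplicity p m'"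
      using that m'0 by (intro prime_elem_multiplicity_mult_distrib) auto
    ultimately show ?thesis using mm by simp
  qed
  have sub: "{p \<in> prime_factors m. odd (multiplicity p m)} \<subseteq> insert 2 {p \<in> prime_factors m'. odd (multiplicity p m')}"
  proof
    fix p assume p: "p \<in> {p \<in> prime_factors m. odd (multiplicity p m)}"
    show "p \<in> insert 2 {p \<in> prime_factors m'. odd (multiplicity p m')}"
    proof (cases "p = 2")
      case False
      have pr: "prime p" using p by auto
      have om: "odd (multiplicity p m')" using p mult[OF pr False] by auto
      then have "multiplicity p m' > 0" by (cases "multiplicity p m'") auto
      then have "p \<in> prime_factors m'" using pr m'0 by (simp add: prime_factors_multiplicity)
      then show ?thesis using om by simp
    qed simp
  qed
  have fin: "finite (insert 2 {p \<in> prime_factors m'. odd (multiplicity p m')})" by simp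
  have "sqf_part m dvd (\<Prod>p\<in>insert 2 {p \<in> prime_factors m'. odd (multiplicity p m')}. p)"
    unfolding sqf_part_def by (rule prod_dvd_prod_subset[OF fin sub])
  then have "sqf_part m \<le> (\<Prod>p\<in>insert 2 {p \<in> prime_factors m'. odd (multiplicity p m')}. p)"
    by (rule dvd_imp_le) (intro prod_pos, auto intro: pf_pos)
  also have "\<dots> \<le> 2 * sqf_part m'"
    unfolding sqf_part_def by (simp add: prod.insert_if)
  finally show ?thesis unfolding m'_def e_def .
qed

lemma cpow_gt1:
  assumes "prime p" "0 < Re s" shows "1 < norm ((of_nat p :: complex) powr s)"
proof -
  have "1 < real p" using prime_gt_1_nat[OF assms(1)] by simp
  then have "1 < real p powr Re s" using assms(2) by simp
  then show ?thesis using cpow_norm[of p s] prime_gt_0_nat[OF assms(1)] by simp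
qed

lemma h_bound_gen:
  fixes b :: "nat \<Rightarrow> real"
  assumes m1: "m \<ge> 1" and rs: "0 < Re s"
   and b1: "\<And>p. p \<in> prime_factors m \<Longrightarrow> norm ((of_nat p powr s - 1) / (of_nat p powr s + 1)) \<le> b p"
   and b2: "\<And>p. p \<in> prime_factors m \<Longrightarrow> p \<noteq> 2 \<Longrightarrow>
      norm (((of_nat p - 2) * of_nat p powr s + of_nat p) / (of_nat p * (of_nat p powr s + 1))) \<le> b p"
  shows "norm (h m s) \<le> (2 / real (sqf_part m)) * (\<Prod>p\<in>prime_factors m. b p) * norm (kappa_t m s)"
proof -
  define m0 where "m0 = sqf_part (m div 2 ^ multiplicity (2::nat) m)"
  define E where "E = {p\<in>prime_factors m. p \<noteq> 2 \<and> even (multiplicity p m)}"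
  define N where "N = (\<lambda>p::nat. (1 - 2 / of_nat p) * (1 + 2 * (of_nat p - 1) / ((of_nat p - 2) * (of_nat p powr s - 1))) :: complex)"
  define D where "D = (\<lambda>p::nat. 1 + 2 / (of_nat p powr s - 1) :: complex)"
  have hm: "h m s = ((-1) ^ card (prime_factors m0) / of_nat m0) * ((\<Prod>p\<in>E. N p) / (\<Prod>p\<in>prime_factors m. D p)) * kappa_t m s"
    unfolding h_def Let_def m0_def E_def N_def D_def by simp
  have m0p: "0 < m0" unfolding m0_def by (rule sqf_pos)
  have n1: "norm ((-1) ^ card (prime_factors m0) / (of_nat m0 :: complex)) = 1 / real m0"
    by (simp add: norm_divide norm_power)
  have xne: "(of_nat p :: complex) powr s \<noteq> 1 \<and> (of_nat p :: complex) powr s \<noteq> -1" if "p \<in> prime_factors m" for p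
    using cpow_gt1[of p s] that rs by (auto dest: in_prime_factors_imp_prime)
  have rb: "norm ((\<Prod>p\<in>E. N p) / (\<Prod>p\<in>prime_factors m. D p)) \<le> (\<Prod>p\<in>prime_factors m. b p)"
  proof (rule prod_ratio_bound)
    show "finite (prime_factors m)" by simp
    show "E \<subseteq> prime_factors m" unfolding E_def by auto
  next
    fix p assume p: "p \<in> prime_factors m"
    have "D p = ((of_nat p :: complex) powr s + 1) / (of_nat p powr s - 1)"
      unfolding D_def using xne[OF p] by (simp add: field_simps)
    then show "D p \<noteq> 0" using xne[OF p] eq_neg_iff_add_eq_0[of "(of_nat p :: complex) powr s" 1] by auto
  next
    fix p assume p: "p \<in> E"
    then have pm: "p \<in> prime_factors m" and p2: "p \<noteq> 2" unfolding E_def by auto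
    have "N p / D p = ((of_nat p - 2) * of_nat p powr s + of_nat p) / (of_nat p * (of_nat p powr s + 1))"
      unfolding N_def D_def using xne[OF pm] p2 pf_pos[OF pm] by (intro ND_alg(1)) auto
    then show "norm (N p / D p) \<le> b p" using b2[OF pm p2] by simp
  next
    fix p assume p: "p \<in> prime_factors m - E"
    then have pm: "p \<in> prime_factors m" by auto
    have "1 / D p = (of_nat p powr s - 1) / (of_nat p powr s + 1)"
      unfolding D_def using xne[OF pm] by (intro ND_alg(2)) auto
    then show "norm (1 / D p) \<le> b p" using b1[OF pm] by simp
  qed
  have "norm (h m s) = (1 / real m0) * norm ((\<Prod>p\<in>E. N p) / (\<Prod>p\<in>prime_factors m. D p)) * norm (kappa_t m s)"
    unfolding hm norm_mult n1 ..
  also have "\<dots> \<le> (2 / real (sqf_part m)) * (\<Prod>p\<in>prime_factors m. b p) * norm (kappa_t m s)"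
  proof (intro mult_right_mono mult_mono rb)
    have "real (sqf_part m) \<le> 2 * real m0" using sqf_le[OF m1] unfolding m0_def by linarith
    then show "1 / real m0 \<le> 2 / real (sqf_part m)" using m0p sqf_pos[of m] by (simp add: field_simps)
  qed (auto intro: order_trans[OF norm_ge_zero])
  finally show ?thesis .
qed



lemma sum_inv_sqrt:
  fixes S :: "nat set"
  assumes "finite S" "0 \<notin> S"
  shows "(\<Sum>n\<in>S. 1 / sqrt (real n)) \<le> 2 * sqrt (real (card S))"
  using assms
proof (induction S rule: finite_linorder_max_induct)
  case empty then show ?case by simp
next
  case (insert b A)
  have bA: "b \<notin> A" using insert(2) by auto
  have A0: "0 \<notin> A" using insert(4) by auto
  have b0: "b \<noteq> 0" using insert(4) by auto
  have sub: "A \<subseteq> {1..<b}" using insert(2) A0 by (auto simp: Suc_le_eq) (metis neq0_conv)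
  then have "card A \<le> b - 1" using card_mono[of "{1..<b}" A] by simp
  define k where "k = card A + 1"
  have kb: "k \<le> b" unfolding k_def using \<open>card A \<le> b - 1\<close> b0 by simp
  have ck: "card (insert b A) = k" unfolding k_def using bA insert(1) by simp
  have IH: "(\<Sum>n\<in>A. 1 / sqrt (real n)) \<le> 2 * sqrt (real k - 1)"
    using insert(3)[OF A0] unfolding k_def by simp
  have k1: "1 \<le> real k" unfolding k_def by simp
  have "1 / sqrt (real b) \<le> 1 / sqrt (real k)"
    using kb k1 by (intro divide_left_mono) auto
  moreover have "1 / sqrt (real k) + 2 * sqrt (real k - 1) \<le> 2 * sqrt (real k)"
  proof -
    define a where "a = sqrt (real k)"
    define c where "c = sqrt (real k - 1)"
    have a2: "a^2 = real k" unfolding a_def using k1 by simp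
    have c2: "c^2 = real k - 1" unfolding c_def using k1 by simp
    have a0: "0 < a" unfolding a_def using k1 by simp
    have "2 * a * c \<le> a^2 + c^2" using sum_squares_bound[of a c] by simp
    then have "1 + 2 * a * c \<le> 2 * a^2" using a2 c2 by simp
    then have "1 / a + 2 * c \<le> 2 * a" using a0 by (simp add: field_simps power2_eq_square)
    then show ?thesis unfolding a_def c_def .
  qed
  ultimately show ?case unfolding ck using IH bA insert(1) by simp
qed

lemma card_pf_le: "m \<ge> 1 \<Longrightarrow> real (card (prime_factors m)) \<le> 2 * ln (real m)"
proof -
  assume m1: "m \<ge> 1"
  have "(2::nat) ^ card (prime_factors m) = (\<Prod>p\<in>prime_factors m. 2)" by simp
  also have "\<dots> \<le> (\<Prod>p\<in>prime_factors m. p ^ multiplicity p m)"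
  proof (intro prod_mono conjI)
    fix p assume p: "p \<in> prime_factors m"
    have "2 \<le> p" using p prime_ge_2_nat in_prime_factors_imp_prime by blast
    moreover have "1 \<le> multiplicity p m" using p by (simp add: prime_factors_multiplicity)
    ultimately have "2 ^ 1 \<le> p ^ multiplicity p m"
      by (meson order.trans power_increasing power_mono zero_le_numeral one_le_numeral le_trans)
      then show "2 \<le> p ^ multiplicity p m" by simp
  qed simp
  also have "\<dots> = m" using prime_factorization_nat[of m] m1 by simp
  finally have "(2::real) ^ card (prime_factors m) \<le> real m" by (simp flip: of_nat_le_iff)
  then have "ln ((2::real) ^ card (prime_factors m)) \<le> ln (real m)" by (rule ln_mono) simp_all
  then have "real (card (prime_factors m)) * ln 2 \<le> ln (real m)" by (simp add: ln_realpow)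
  moreover have "ln (2::real) \<ge> 1/2" using ln2_ge_two_thirds by simp
  moreover have "0 \<le> ln (real m)" using m1 by simp
  moreover have "real (card (prime_factors m)) * (1/2) \<le> real (card (prime_factors m)) * ln 2"
    using ln2_ge_two_thirds by (intro mult_left_mono) auto
  ultimately show ?thesis by linarith
qed

lemma kappa_denoms:
  assumes "1/2 < Re s"
  shows "(8::complex) powr s + 2 powr s + 2 \<noteq> 0" and "(4::complex) powr s * (2 powr s - 1) \<noteq> 0"
proof -
  define x where "x = (2::complex) powr s"
  have nx: "norm x = 2 powr Re s" unfolding x_def using cpow_norm[of 2 s] by simp
  have g: "sqrt 2 < norm x" unfolding nx using two_powr_gt_sqrt2[OF assms] .
  have s2g: "sqrt 2 \<ge> 1.4" using sqrt2_bounds by simp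
  have xn1: "x + 1 \<noteq> 0"
  proof
    assume "x + 1 = 0" then have "x = -1" by (simp add: eq_neg_iff_add_eq_0)
    then show False using g s2g by simp
  qed
  have x1: "x - 1 \<noteq> 0" using g s2g by auto
  have x0: "x \<noteq> 0" using g s2g by auto
  have "norm (x^2 - x + 2) \<ge> (norm x - sqrt 2)^2" using quad_lower g by simp
  moreover have "0 < (norm x - sqrt 2)^2" using g by simp
  ultimately have q0: "x^2 - x + 2 \<noteq> 0" by auto
  have "x^3 + x + 2 = (x^2 - x + 2) * (x + 1)"
    by (simp add: algebra_simps power2_eq_square power3_eq_cube)
  then show "(8::complex) powr s + 2 powr s + 2 \<noteq> 0"
    unfolding cpow_8 x_def[symmetric] using q0 xn1 by simp
  show "(4::complex) powr s * (2 powr s - 1) \<noteq> 0"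
    unfolding cpow_4 x_def[symmetric] using x0 x1 by simp
qed

lemma kappa_holo: "kappa_t m holomorphic_on {s. 1/2 < Re s}"
proof (cases "odd m")
  case True
  then have "kappa_t m = (\<lambda>_. 1)" by (intro ext) (simp add: kappa_t_def)
  then show ?thesis by simp
next
  case False
  define e where "e = multiplicity (2::nat) m"
  have "kappa_t m = (\<lambda>s. ((-1) ^ e / 2) * ((8 powr s + 4 powr s) / (8 powr s + 2 powr s + 2))
        * (1 + 2 * (1 + (-1) ^ e) / (4 powr s * (2 powr s - 1))))"
    using False by (intro ext) (simp add: kappa_t_def Let_def e_def)
  moreover have "(\<lambda>s. ((-1) ^ e / 2) * ((8 powr s + 4 powr s) / (8 powr s + 2 powr s + 2))
        * (1 + 2 * (1 + (-1) ^ e) / (4 powr s * (2 powr s - 1)))) holomorphic_on {s. 1/2 < Re s}"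
    using kappa_denoms by (intro holomorphic_intros) auto
  ultimately show ?thesis by simp
qed

lemma h_holo: "h m holomorphic_on {s. 1/2 < Re s}"
proof -
  define U where "U = {s::complex. 1/2 < Re s}"
  define m0 where "m0 = sqf_part (m div 2 ^ multiplicity (2::nat) m)"
  define E where "E = {p\<in>prime_factors m. p \<noteq> 2 \<and> even (multiplicity p m)}"
  define c where "c = ((-1) ^ card (prime_factors m0) / of_nat m0 :: complex)"
  have hm: "h m = (\<lambda>s. c * ((\<Prod>p\<in>E. (1 - 2 / of_nat p) * (1 + 2 * (of_nat p - 1) / ((of_nat p - 2) * (of_nat p powr s - 1))))
       / (\<Prod>p\<in>prime_factors m. 1 + 2 / (of_nat p powr s - 1))) * kappa_t m s)"
    by (intro ext) (simp add: h_def Let_def m0_def E_def c_def)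
  have gt1: "1 < norm ((of_nat p :: complex) powr s)" if "p \<in> prime_factors m" "s \<in> U" for p s
    using cpow_gt1[of p s] that unfolding U_def by (auto dest: in_prime_factors_imp_prime)
  have x1: "(of_nat p :: complex) powr s - 1 \<noteq> 0" if "p \<in> prime_factors m" "s \<in> U" for p s
    using gt1[OF that] by auto
  have Dnz: "1 + 2 / ((of_nat p :: complex) powr s - 1) \<noteq> 0" if "p \<in> prime_factors m" "s \<in> U" for p s
  proof -
    have "(of_nat p :: complex) powr s + 1 \<noteq> 0"
    proof
      assume "(of_nat p :: complex) powr s + 1 = 0"
      then have "(of_nat p :: complex) powr s = -1" by (simp add: eq_neg_iff_add_eq_0)
      then show False using gt1[OF that] by simp
    qed
    moreover have "1 + 2 / ((of_nat p :: complex) powr s - 1) = (of_nat p powr s + 1) / (of_nat p powr s - 1)"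
      using x1[OF that] by (simp add: field_simps)
    ultimately show ?thesis using x1[OF that] by simp
  qed
  have p2: "(of_nat p :: complex) - 2 \<noteq> 0" if "p \<in> E" for p
  proof
    assume "(of_nat p :: complex) - 2 = 0" then have "(of_nat p :: complex) = of_nat 2" by simp
    then have "p = 2" by (simp only: of_nat_eq_iff)
    then show False using that unfolding E_def by simp
  qed
  have EP: "E \<subseteq> prime_factors m" unfolding E_def by auto
  have "(\<lambda>s. c * ((\<Prod>p\<in>E. (1 - 2 / of_nat p) * (1 + 2 * (of_nat p - 1) / ((of_nat p - 2) * (of_nat p powr s - 1))))
       / (\<Prod>p\<in>prime_factors m. 1 + 2 / (of_nat p powr s - 1))) * kappa_t m s) holomorphic_on U"
  proof (intro holomorphic_intros)
    show "kappa_t m holomorphic_on U" using kappa_holo unfolding U_def .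
  next
    fix z p assume "z \<in> U" "p \<in> E"
    then show "(of_nat p - 2) * (of_nat p powr z - 1) \<noteq> (0::complex)"
      using p2 x1 EP by auto
  next
    fix z p assume "z \<in> U" "p \<in> prime_factors m"
    then show "(of_nat p :: complex) powr z - 1 \<noteq> 0" using x1 by auto
  next
    fix z assume "z \<in> U"
    then show "(\<Prod>p\<in>prime_factors m. 1 + 2 / ((of_nat p :: complex) powr z - 1)) \<noteq> 0"
      using Dnz by simp
  qed
  then show ?thesis unfolding hm U_def .
qed

lemma ln_m2_ge1: "m \<ge> 1 \<Longrightarrow> 1 \<le> ln (real m + 2)"
proof -
  assume "m \<ge> 1"
  then have "3 \<le> real m + 2" by simp
  then have "exp 1 \<le> real m + 2" using exp_le by linarith
  then have "ln (exp 1) \<le> ln (real m + 2)" by (rule ln_mono) simp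
  then show ?thesis by simp
qed

definition K1 :: real where "K1 = 3 * ((2 powr (3/4)) / (2 powr (3/4) - sqrt 2))^2"

lemma part1_ball:
  fixes s :: complex
  assumes m1: "m \<ge> 1" and s: "norm (1 - s) \<le> 1 / (4 * ln (real m + 2))"
  shows "norm (h m s) \<le> 2 * K1 / real (sqf_part m)"
proof -
  define r where "r = 1 / (4 * ln (real m + 2))"
  have L1: "1 \<le> ln (real m + 2)" by (rule ln_m2_ge1) fact
  have r0: "0 < r" and r4: "r \<le> 1/4" unfolding r_def using L1 by (auto simp: field_simps)
  have sr: "norm (1 - s) \<le> r" using s r_def by simp
  have "\<bar>Re (1 - s)\<bar> \<le> r" using abs_Re_le_cmod[of "1 - s"] sr by linarith
  then have res: "3/4 \<le> Re s" using r4 by simp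
  have "\<bar>Im (1 - s)\<bar> \<le> r" using abs_Im_le_cmod[of "1 - s"] sr by linarith
  then have ims: "\<bar>Im s\<bar> \<le> r" by simp
  have reX: "0 \<le> Re ((of_nat p :: complex) powr s)" if p: "p \<in> prime_factors m" for p
  proof -
    have pp: "0 < p" using pf_pos[OF p] .
    have "p \<le> m" using p m1 by (auto intro: dvd_imp_le)
    then have lp: "ln (real p) \<le> ln (real m + 2)" using pp by simp
    have lp0: "0 \<le> ln (real p)" using pp by simp
    have "\<bar>Im s * ln (real p)\<bar> \<le> r * ln (real m + 2)"
      unfolding abs_mult using ims lp lp0 r0 by (intro mult_mono) auto
    also have "\<dots> = 1/4" unfolding r_def using L1 by simp
    also have "\<dots> \<le> pi / 2" using pi_gt3 by simp
    finally have "0 \<le> cos (Im s * ln (real p))" by (intro cos_ge_zero) auto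
    then show ?thesis unfolding cpow_Re[OF pp] by simp
  qed
  have q2: "2 \<le> p" if "p \<in> prime_factors m" for p
    using that prime_ge_2_nat in_prime_factors_imp_prime by blast
  have "norm (h m s) \<le> (2 / real (sqf_part m)) * (\<Prod>p\<in>prime_factors m. 1) * norm (kappa_t m s)"
    using res by (intro h_bound_gen m1) (auto intro: re_bound reX q2)
  also have "\<dots> = (2 / real (sqf_part m)) * norm (kappa_t m s)" by simp
  also have "\<dots> \<le> (2 / real (sqf_part m)) * K1"
  proof (rule mult_left_mono)
    show "norm (kappa_t m s) \<le> K1" using kappa_bound[of "3/4" s m] res unfolding K1_def by simp
  qed simp
  finally show ?thesis by simp
qed

lemma part1_deriv:
  assumes m1: "m \<ge> 1"
  shows "norm ((deriv ^^ n) (h m) 1) \<le> fact n * (2 * K1 / real (sqf_part m)) / (1 / (4 * ln (real m + 2))) ^ n"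
proof (rule Cauchy_inequality)
  define r where "r = 1 / (4 * ln (real m + 2))"
  have L1: "1 \<le> ln (real m + 2)" by (rule ln_m2_ge1) fact
  have r0: "0 < r" and r4: "r \<le> 1/4" unfolding r_def using L1 by (auto simp: field_simps)
  have sub: "cball 1 r \<subseteq> {s. 1/2 < Re s}"
  proof
    fix s :: complex assume "s \<in> cball 1 r"
    then have "norm (1 - s) \<le> r" by (simp add: dist_norm)
    then have "\<bar>Re (1 - s)\<bar> \<le> r" using abs_Re_le_cmod[of "1 - s"] by linarith
    then show "s \<in> {s. 1/2 < Re s}" using r4 by simp
  qed
  show "h m holomorphic_on ball 1 (1 / (4 * ln (real m + 2)))"
    using h_holo sub ball_subset_cball unfolding r_def by (meson holomorphic_on_subset subset_trans)
  show "continuous_on (cball 1 (1 / (4 * ln (real m + 2)))) (h m)"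
    using holomorphic_on_imp_continuous_on[OF h_holo] sub unfolding r_def by (meson continuous_on_subset)
  show "0 < 1 / (4 * ln (real m + 2))" using r0 unfolding r_def .
  show "norm (h m x) \<le> 2 * K1 / real (sqf_part m)" if "norm (1 - x) = 1 / (4 * ln (real m + 2))" for x :: complex
    using part1_ball[OF m1] that by simp
qed

lemma part2_prime:
  assumes p: "prime p" and s: "1/2 < Re s"
  shows "1 + 2 / (norm ((of_nat p :: complex) powr s) - 1) \<le> exp (7 / sqrt (real p))"
proof -
  have pp: "0 < p" using prime_gt_0_nat[OF p] .
  have p2: "2 \<le> real p" using prime_ge_2_nat[OF p] by simp
  have "real p powr (1/2) < real p powr Re s" using s p2 by (intro powr_less_mono) auto
  then have gt: "sqrt (real p) < norm ((of_nat p :: complex) powr s)"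
    using cpow_norm[OF pp, of s] p2 by (simp add: powr_half_sqrt)
  have sq2: "sqrt 2 \<le> sqrt (real p)" using p2 by simp
  have sp: "1.4 < sqrt (real p)" using sq2 sqrt2_bounds by linarith
  have "2 / (norm ((of_nat p :: complex) powr s) - 1) \<le> 2 / (sqrt (real p) - 1)"
    using gt sp prime_gt_1_nat[OF p] by (intro divide_left_mono mult_pos_pos) auto
  also have "\<dots> \<le> 7 / sqrt (real p)"
  proof -
    have a0: "0 < sqrt (real p) - 1" "0 < sqrt (real p)" using sp by linarith+
    have "2 * sqrt (real p) \<le> 7 * (sqrt (real p) - 1)" using sp by (simp add: algebra_simps)
    then show ?thesis using a0 prime_gt_1_nat[OF p] by (simp add: field_simps)
  qed
  finally have "1 + 2 / (norm ((of_nat p :: complex) powr s) - 1) \<le> 1 + 7 / sqrt (real p)" by simp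
  also have "\<dots> \<le> exp (7 / sqrt (real p))" by (rule exp_ge_add_one_self)
  finally show ?thesis .
qed

lemma part2_bound:
  assumes m1: "m \<ge> 1" and s1: "1/2 < \<sigma>" and s2: "\<sigma> < Re s"
  shows "norm (h m s) \<le> (2 / real (sqf_part m)) * exp (14 * sqrt (2 * ln (real m)))
           * (3 * ((2 powr \<sigma>) / (2 powr \<sigma> - sqrt 2))^2)"
proof -
  have rs: "1/2 < Re s" using s1 s2 by simp
  have gt1: "1 < norm ((of_nat p :: complex) powr s)" if "p \<in> prime_factors m" for p
    using cpow_gt1[of p s] that rs by (auto dest: in_prime_factors_imp_prime)
  have q2: "2 \<le> p" if "p \<in> prime_factors m" for p
    using that prime_ge_2_nat in_prime_factors_imp_prime by blast
  have bb: "1 + 2 / (norm ((of_nat p :: complex) powr s) - 1) \<le> exp (7 / sqrt (real p))"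
    if "p \<in> prime_factors m" for p
    using part2_prime[OF _ rs] that by (auto dest: in_prime_factors_imp_prime)
  have "norm (h m s) \<le> (2 / real (sqf_part m)) * (\<Prod>p\<in>prime_factors m. exp (7 / sqrt (real p))) * norm (kappa_t m s)"
  proof (rule h_bound_gen[OF m1])
    show "0 < Re s" using rs by simp
  next
    fix p assume p: "p \<in> prime_factors m"
    show "norm ((of_nat p powr s - 1) / (of_nat p powr s + 1)) \<le> exp (7 / sqrt (real p))"
      using r_bound(1)[OF gt1[OF p] q2[OF p]] bb[OF p] by linarith
    assume "p \<noteq> 2"
    show "norm (((of_nat p - 2) * of_nat p powr s + of_nat p) / (of_nat p * (of_nat p powr s + 1))) \<le> exp (7 / sqrt (real p))"
      using r_bound(2)[OF gt1[OF p] q2[OF p]] bb[OF p] by linarith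
  qed
  also have "\<dots> \<le> (2 / real (sqf_part m)) * exp (14 * sqrt (2 * ln (real m)))
           * (3 * ((2 powr \<sigma>) / (2 powr \<sigma> - sqrt 2))^2)"
  proof (intro mult_mono mult_left_mono)
    show "norm (kappa_t m s) \<le> 3 * ((2 powr \<sigma>) / (2 powr \<sigma> - sqrt 2))^2"
      using kappa_bound[OF s1] s2 by simp
    have "(\<Prod>p\<in>prime_factors m. exp (7 / sqrt (real p))) = exp (\<Sum>p\<in>prime_factors m. 7 / sqrt (real p))"
      by (simp add: exp_sum)
    also have "(\<Sum>p\<in>prime_factors m. 7 / sqrt (real p)) = 7 * (\<Sum>p\<in>prime_factors m. 1 / sqrt (real p))"
      by (simp add: sum_distrib_left)
    also have "\<dots> \<le> 7 * (2 * sqrt (real (card (prime_factors m))))"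
    proof -
      have "0 \<notin> prime_factors m" using pf_pos by blast
      then have "(\<Sum>p\<in>prime_factors m. 1 / sqrt (real p)) \<le> 2 * sqrt (real (card (prime_factors m)))"
        by (intro sum_inv_sqrt) auto
      then show ?thesis by simp
    qed
    also have "\<dots> \<le> 14 * sqrt (2 * ln (real m))"
      using card_pf_le[OF m1] by simp
    finally show "(\<Prod>p\<in>prime_factors m. exp (7 / sqrt (real p))) \<le> exp (14 * sqrt (2 * ln (real m)))"
      by simp
  qed (auto simp: sqf_pos intro: prod_nonneg)
  finally show ?thesis .
qed

lemma part2_arith:
  assumes m1: "m \<ge> 1" and s1: "1/2 < \<sigma>" and s2: "\<sigma> < 1"
  shows "exp (14 * sqrt (2 * ln (real m))) \<le> real m powr (28 / ln (1 + real m) powr (\<sigma>/2))"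
proof (cases "m = 1")
  case True then show ?thesis by simp
next
  case False
  then have m2: "2 \<le> real m" using m1 by simp
  define L where "L = ln (real m)"
  have L0: "0 < L" unfolding L_def using m2 by simp
  have l1: "1 \<le> ln (1 + real m)"
  proof -
    have "exp 1 \<le> 1 + real m" using exp_le m2 by linarith
    then have "ln (exp 1) \<le> ln (1 + real m)" by (rule ln_mono) simp
    then show ?thesis by simp
  qed
  have l2: "ln (1 + real m) \<le> 2 * L"
  proof -
    have "2 * real m \<le> real m * real m" using m2 by (intro mult_right_mono) auto
    then have "1 + real m \<le> real m * real m" using m2 by linarith
    then have "1 + real m \<le> real m ^ 2" by (simp add: power2_eq_square)
    then have "ln (1 + real m) \<le> ln (real m ^ 2)" by (rule ln_mono) simp
    then show ?thesis unfolding L_def using m2 by (simp add: ln_realpow)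
  qed
  define T where "T = ln (1 + real m) powr (\<sigma>/2)"
  have T0: "0 < T" unfolding T_def using l1 m1 by simp
  have "T \<le> ln (1 + real m) powr (1/2)" unfolding T_def using l1 s2 by (intro powr_mono) auto
  also have "\<dots> = sqrt (ln (1 + real m))" using l1 by (simp add: powr_half_sqrt)
  also have "\<dots> \<le> sqrt (2 * L)" using l2 by simp
  finally have Tle: "T \<le> sqrt (2 * L)" .
  have sL: "0 < sqrt (2 * L)" using L0 by simp
  have "14 * sqrt (2 * L) = 28 * L / sqrt (2 * L)"
    using sL L0 by (simp add: field_simps)
  also have "\<dots> \<le> 28 * L / T" using Tle T0 L0 by (intro divide_left_mono) auto
  finally have "14 * sqrt (2 * L) \<le> 28 / T * L" by simp
  then have "exp (14 * sqrt (2 * L)) \<le> exp (28 / T * L)" by simp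
  also have "\<dots> = real m powr (28 / T)" unfolding L_def powr_def using m2 by simp
  finally show ?thesis unfolding T_def L_def .
qed

lemma K1_pos: "0 < K1"
proof -
  have "sqrt 2 < (2::real) powr (3/4)" using two_powr_gt_sqrt2[of "3/4"] by simp
  then show ?thesis unfolding K1_def by simp
qed

lemma part1_all:
  assumes m1: "m \<ge> 1" and n: "n \<le> 2"
  shows "norm ((deriv ^^ n) (h m) 1) \<le> 256 * K1 * ln (real m + 1) ^ 2 / real (sqf_part m)"
proof -
  define M where "M = 2 * K1 / real (sqf_part m)"
  define l where "l = ln (real m + 2)"
  define lam where "lam = ln (real m + 1)"
  have M0: "0 \<le> M" unfolding M_def using K1_pos sqf_pos[of m] by simp
  have l0: "0 \<le> l" unfolding l_def by simp
  have la: "2/3 \<le> lam"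
  proof -
    have "ln 2 \<le> lam" unfolding lam_def using m1 by simp
    then show ?thesis using ln2_ge_two_thirds by simp
  qed
  have ll: "l \<le> 2 * lam"
  proof -
    have "1 \<le> real m" using m1 by simp
    moreover have "0 \<le> real m * real m" by simp
    ultimately have "real m + 2 \<le> real m * real m + 2 * real m + 1" by linarith
    then have "real m + 2 \<le> (real m + 1)^2" by (simp add: power2_eq_square algebra_simps)
    then have "ln (real m + 2) \<le> ln ((real m + 1)^2)" by (rule ln_mono) simp
    then show ?thesis unfolding l_def lam_def by (simp add: ln_realpow)
  qed
  have C: "norm ((deriv ^^ n) (h m) 1) \<le> fact n * M * (4 * l) ^ n"
    using part1_deriv[OF m1, of n] unfolding M_def l_def by (simp add: power_divide)
  have la2: "4/9 \<le> lam^2"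
  proof -
    have "(2/3)^2 \<le> lam^2" using la by (intro power_mono) auto
    then show ?thesis by (simp add: power2_eq_square)
  qed
  have "fact n * (4 * l) ^ n \<le> 128 * lam^2"
  proof -
    have "n = 0 \<or> n = 1 \<or> n = 2" using n by auto
    then show ?thesis
    proof (elim disjE)
      assume "n = 0" then show ?thesis using la2 by simp
    next
      assume "n = 1"
      have "lam \<le> (3/2) * lam^2" using la by (simp add: power2_eq_square)
      then show ?thesis using \<open>n = 1\<close> ll la2 by (simp; linarith)
    next
      assume "n = 2"
      have "(4 * l)^2 \<le> (8 * lam)^2" using ll l0 by (intro power_mono) auto
      then show ?thesis using \<open>n = 2\<close> by (simp add: power_mult_distrib)
    qed
  qed
  then have "(fact n * (4 * l) ^ n) * M \<le> (128 * lam^2) * M"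
    using M0 by (rule mult_right_mono)
  then have "fact n * M * (4 * l) ^ n \<le> 128 * lam^2 * M"
    by (simp only: mult.commute mult.left_commute)
  also have "\<dots> = 256 * K1 * ln (real m + 1) ^ 2 / real (sqf_part m)"
    unfolding M_def lam_def by simp
  finally show ?thesis using C by linarith
qed

theorem lemma17:
  shows "(\<exists>C. \<forall>m::nat. m \<ge> 1 \<longrightarrow>
            norm (h m 1) \<le> C * ln (real m + 1) ^ 2 / real (sqf_part m)
          \<and> norm (deriv (h m) 1) \<le> C * ln (real m + 1) ^ 2 / real (sqf_part m)
          \<and> norm (deriv (deriv (h m)) 1) \<le> C * ln (real m + 1) ^ 2 / real (sqf_part m))
       \<and> (\<forall>\<sigma>::real. 1/2 < \<sigma> \<and> \<sigma> < 1 \<longrightarrow>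
            (\<exists>C K. \<forall>m::nat. m \<ge> 1 \<longrightarrow> (\<forall>s::complex. Re s > \<sigma> \<longrightarrow>
               norm (h m s) \<le> C * real m powr (K / ln (1 + real m) powr (\<sigma>/2)) / real (sqf_part m))))"
proof (intro conjI allI impI)
  show "\<exists>C. \<forall>m::nat. m \<ge> 1 \<longrightarrow>
            norm (h m 1) \<le> C * ln (real m + 1) ^ 2 / real (sqf_part m)
          \<and> norm (deriv (h m) 1) \<le> C * ln (real m + 1) ^ 2 / real (sqf_part m)
          \<and> norm (deriv (deriv (h m)) 1) \<le> C * ln (real m + 1) ^ 2 / real (sqf_part m)"
  proof (intro exI allI impI conjI)
    fix m :: nat assume m1: "m \<ge> 1"
    show "norm (h m 1) \<le> 256 * K1 * ln (real m + 1) ^ 2 / real (sqf_part m)"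
      using part1_all[OF m1, of 0] by simp
    show "norm (deriv (h m) 1) \<le> 256 * K1 * ln (real m + 1) ^ 2 / real (sqf_part m)"
      using part1_all[OF m1, of 1] by simp
    show "norm (deriv (deriv (h m)) 1) \<le> 256 * K1 * ln (real m + 1) ^ 2 / real (sqf_part m)"
      using part1_all[OF m1, of "Suc (Suc 0)"] by simp
  qed
next
  fix \<sigma> :: real assume \<sigma>: "1/2 < \<sigma> \<and> \<sigma> < 1"
  define B where "B = 3 * ((2 powr \<sigma>) / (2 powr \<sigma> - sqrt 2))^2"
  have B0: "0 \<le> B" unfolding B_def by simp
  show "\<exists>C K. \<forall>m::nat. m \<ge> 1 \<longrightarrow> (\<forall>s::complex. Re s > \<sigma> \<longrightarrow>
               norm (h m s) \<le> C * real m powr (K / ln (1 + real m) powr (\<sigma>/2)) / real (sqf_part m))"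
  proof (intro exI allI impI)
    fix m :: nat and s :: complex assume m1: "m \<ge> 1" and s: "\<sigma> < Re s"
    have "norm (h m s) \<le> (2 / real (sqf_part m)) * exp (14 * sqrt (2 * ln (real m))) * B"
      using part2_bound[OF m1 _ s] \<sigma> unfolding B_def by simp
    also have "\<dots> \<le> (2 / real (sqf_part m)) * (real m powr (28 / ln (1 + real m) powr (\<sigma>/2))) * B"
      using part2_arith[OF m1] \<sigma> B0 sqf_pos[of m] by (intro mult_right_mono mult_left_mono) auto
    also have "\<dots> = (2 * B) * real m powr (28 / ln (1 + real m) powr (\<sigma>/2)) / real (sqf_part m)"
      by simp
    finally show "norm (h m s) \<le> (2 * B) * real m powr (28 / ln (1 + real m) powr (\<sigma>/2)) / real (sqf_part m)" .
  qed
qed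

end
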